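(* Let $X$ be a Banach lattice with order continuous norm, and let $S$ be a convex $C_0$-semigroup on $X$ with generator $A\colon D(A)\subset X\to X$. Then $A$ is closed: for every sequence $(x_n)_{n\in\mathbb N}$ in $D(A)$ with $x_n\to x\in X$ and $Ax_n\to y\in X$, it holds $x\in D(A)$ and $Ax=y$.
   Context: A Banach lattice $X$ has order continuous norm if $\|x_\alpha\|\to 0$ for every net $x_\alpha\downarrow 0$. An operator $T\colon X\to X$ is convex if $T(\lambda x+(1-\lambda)y)\le \lambda Tx+(1-\lambda)Ty$ for all $x,y$, $\lambda\in[0,1]$, and bounded if $\sup_{\|x\|\le r}\|Tx\|<\infty$ for all $r>0$. A convex $C_0$-semigroup is a family $(S(t))_{t\ge0}$ of bounded convex operators $X\to X$ with $S(0)=\mathrm{id}$, $S(t+s)=S(t)S(s)$ for all $s,t\ge0$, and $S(t)x\to x$ as $t\downarrow 0$ for all $x$. Its generator is $Ax:=\lim_{h\downarrow 0}\frac{S(h)x-x}{h}$ with domain $D(A)$ the set of $x$ for which this norm limit exists. *)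

theory Defs
  imports "HOL-Analysis.Analysis"
begin

class banach_lattice = banach + ordered_real_vector + lattice +
  assumes lattice_norm: "sup x (- x) \<le> sup y (- y) \<Longrightarrow> norm x \<le> norm y"

definition down_directed :: "'a::order set \<Rightarrow> bool" where
  "down_directed D \<longleftrightarrow> D \<noteq> {} \<and> (\<forall>x\<in>D. \<forall>y\<in>D. \<exists>z\<in>D. z \<le> x \<and> z \<le> y)"

text \<open>Order continuous norm: for every net x_alpha decreasing to 0, norm x_alpha \<rightarrow> 0.
  A decreasing net is represented by a downward directed set D (indexed by itself,
  with the reversed order); "decreasing to 0" means 0 is the infimum of D.\<close>
definition order_continuous_norm :: "'a::banach_lattice itself \<Rightarrow> bool" where
  "order_continuous_norm _ \<longleftrightarrow>
     (\<forall>D::'a set. down_directed D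
        \<and> (\<forall>d\<in>D. 0 \<le> d) \<and> (\<forall>z. (\<forall>d\<in>D. z \<le> d) \<longrightarrow> z \<le> 0)
        \<longrightarrow> (\<forall>e>0. \<exists>d0\<in>D. \<forall>d\<in>D. d \<le> d0 \<longrightarrow> norm d < e))"

definition convex_op :: "('a::banach_lattice \<Rightarrow> 'a) \<Rightarrow> bool" where
  "convex_op T \<longleftrightarrow> (\<forall>x y. \<forall>l::real. 0 \<le> l \<and> l \<le> 1 \<longrightarrow>
      T (l *\<^sub>R x + (1 - l) *\<^sub>R y) \<le> l *\<^sub>R T x + (1 - l) *\<^sub>R T y)"

definition bounded_op :: "('a::real_normed_vector \<Rightarrow> 'b::real_normed_vector) \<Rightarrow> bool" where
  "bounded_op T \<longleftrightarrow> (\<forall>r>0. \<exists>M. \<forall>x. norm x \<le> r \<longrightarrow> norm (T x) \<le> M)"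

definition convex_C0_semigroup :: "(real \<Rightarrow> 'a::banach_lattice \<Rightarrow> 'a) \<Rightarrow> bool" where
  "convex_C0_semigroup S \<longleftrightarrow>
     (\<forall>t\<ge>0. convex_op (S t) \<and> bounded_op (S t))
     \<and> S 0 = id
     \<and> (\<forall>s\<ge>0. \<forall>t\<ge>0. S (t + s) = S t \<circ> S s)
     \<and> (\<forall>x. ((\<lambda>t. S t x) \<longlongrightarrow> x) (at_right 0))"

definition gen_domain :: "(real \<Rightarrow> 'a::real_normed_vector \<Rightarrow> 'a) \<Rightarrow> 'a set" where
  "gen_domain S = {x. \<exists>y. ((\<lambda>h. (1 / h) *\<^sub>R (S h x - x)) \<longlongrightarrow> y) (at_right 0)}"

definition generator :: "(real \<Rightarrow> 'a::real_normed_vector \<Rightarrow> 'a) \<Rightarrow> 'a \<Rightarrow> 'a" where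
  "generator S x = Lim (at_right 0) (\<lambda>h. (1 / h) *\<^sub>R (S h x - x))"

end

theory Submission
  imports Defs
begin


lemma bl_abs_nonneg: "0 \<le> sup x (- x :: 'a::banach_lattice)"
proof -
  have "x \<le> sup x (-x)" "-x \<le> sup x (-x)" by auto
  then have "x + - x \<le> sup x (-x) + sup x (-x)" by (rule add_mono)
  then have h: "0 \<le> sup x (-x) + sup x (-x)" by simp
  have "0 \<le> (1/2::real) *\<^sub>R (sup x (-x) + sup x (-x))" by (rule scaleR_nonneg_nonneg) (use h in auto)
  also have "(1/2::real) *\<^sub>R (sup x (-x) + sup x (-x)) = sup x (-x)"
    by (simp add: scaleR_add_right[symmetric] scaleR_2[symmetric])
  finally show ?thesis .
qed

lemma bl_abs_pos: "0 \<le> (p::'a::banach_lattice) \<Longrightarrow> sup p (-p) = p"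
proof -
  assume "0 \<le> p"
  then have "-p \<le> p" using order_trans[of "-p" 0 p] by simp
  then show ?thesis by (rule sup_absorb1)
qed

lemma bl_norm_abs: "norm (sup x (- x)) = norm (x::'a::banach_lattice)"
proof -
  have e: "sup (sup x (-x)) (- sup x (-x)) = sup x (-x)" using bl_abs_pos bl_abs_nonneg by blast
  show ?thesis by (rule antisym; rule lattice_norm; simp add: e)
qed

lemma sandwich_norm:
  fixes a b c :: "'a::banach_lattice"
  assumes "a \<le> b" "b \<le> c"
  shows "norm b \<le> norm a + norm c"
proof -
  define p where "p = sup a (-a) + sup c (-c)"
  have p0: "0 \<le> p" unfolding p_def using bl_abs_nonneg add_nonneg_nonneg by blast
  have "b \<le> p"
  proof -
    have "b \<le> sup c (-c)" using assms by (meson order_trans sup_ge1)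
    also have "\<dots> \<le> p" unfolding p_def using bl_abs_nonneg[of a] by (simp add: add_increasing)
    finally show ?thesis .
  qed
  moreover have "-b \<le> p"
  proof -
    have "-b \<le> sup a (-a)" using assms by (meson neg_le_iff_le order_trans sup_ge2)
    also have "\<dots> \<le> p" unfolding p_def using bl_abs_nonneg[of c] by (simp add: add_increasing2)
    finally show ?thesis .
  qed
  ultimately have "sup b (-b) \<le> sup p (-p)" using bl_abs_pos[OF p0] by simp
  then have "norm b \<le> norm p" by (rule lattice_norm)
  also have "\<dots> \<le> norm (sup a (-a)) + norm (sup c (-c))" unfolding p_def by (rule norm_triangle_ineq)
  finally show ?thesis by (simp add: bl_norm_abs)
qed

lemma convex_ineq:
  fixes T :: "'a::banach_lattice \<Rightarrow> 'a"
  assumes "convex_op T" "0 \<le> l" "l \<le> 1"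
  shows "T (l *\<^sub>R a + (1 - l) *\<^sub>R b) - T b \<le> l *\<^sub>R (T a - T b)"
proof -
  have "T (l *\<^sub>R a + (1 - l) *\<^sub>R b) \<le> l *\<^sub>R T a + (1 - l) *\<^sub>R T b"
    using assms unfolding convex_op_def by blast
  then have "T (l *\<^sub>R a + (1 - l) *\<^sub>R b) - T b \<le> l *\<^sub>R T a + (1 - l) *\<^sub>R T b - T b"
    by (rule diff_right_mono)
  also have "l *\<^sub>R T a + (1 - l) *\<^sub>R T b - T b = l *\<^sub>R (T a - T b)"
    by (simp add: algebra_simps)
  finally show ?thesis .
qed

lemma convex_ineq_lower:
  fixes T :: "'a::banach_lattice \<Rightarrow> 'a"
  assumes "convex_op T" "0 \<le> d"
  shows "d *\<^sub>R (T b - T (b - v)) \<le> T (b + d *\<^sub>R v) - T b"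
proof -
  define l where "l = 1 / (1 + d)"
  have l: "0 \<le> l" "l \<le> 1" using assms by (auto simp: l_def)
  have eq: "l *\<^sub>R (b + d *\<^sub>R v) + (1 - l) *\<^sub>R (b - v) = b"
  proof -
    have "1 - l = d * l" using assms by (simp add: l_def field_simps)
    have "l *\<^sub>R (b + d *\<^sub>R v) + (1 - l) *\<^sub>R (b - v) = b + (l * d - (1 - l)) *\<^sub>R v"
      by (simp add: algebra_simps)
    also have "\<dots> = b" using \<open>1 - l = d * l\<close> by simp
    finally show ?thesis .
  qed
  have "T b \<le> l *\<^sub>R T (b + d *\<^sub>R v) + (1 - l) *\<^sub>R T (b - v)"
    using assms(1) l eq unfolding convex_op_def by metis
  then have "(1 + d) *\<^sub>R T b \<le> (1 + d) *\<^sub>R (l *\<^sub>R T (b + d *\<^sub>R v) + (1 - l) *\<^sub>R T (b - v))"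
    using assms by (intro scaleR_left_mono) auto
  also have "(1 + d) *\<^sub>R (l *\<^sub>R T (b + d *\<^sub>R v) + (1 - l) *\<^sub>R T (b - v)) = T (b + d *\<^sub>R v) + d *\<^sub>R T (b - v)"
  proof -
    have "(1 + d) * l = 1" "(1 + d) * (1 - l) = d" using assms by (auto simp: l_def field_simps)
    then show ?thesis by (simp add: scaleR_add_right)
  qed
  finally have "(1 + d) *\<^sub>R T b \<le> T (b + d *\<^sub>R v) + d *\<^sub>R T (b - v)" .
  then have "(1 + d) *\<^sub>R T b - d *\<^sub>R T (b - v) - T b \<le> T (b + d *\<^sub>R v) + d *\<^sub>R T (b - v) - d *\<^sub>R T (b - v) - T b"
    by (intro diff_right_mono)
  then show ?thesis by (simp add: algebra_simps)
qed



lemma convex_half_lip: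
  fixes T :: "'a::banach_lattice \<Rightarrow> 'a"
  assumes cv: "convex_op T" and r: "0 < r"
  shows "T y - T z \<le> (norm (y - z) / (r + norm (y - z))) *\<^sub>R (T (y + (r / norm (y - z)) *\<^sub>R (y - z)) - T z)"
proof (cases "y = z")
  case True then show ?thesis by simp
next
  case False
  define d where "d = norm (y - z)"
  have d: "0 < d" using False by (simp add: d_def)
  define l where "l = d / (r + d)"
  define w where "w = y + (r / d) *\<^sub>R (y - z)"
  have l: "0 \<le> l" "l \<le> 1" using d r by (auto simp: l_def)
  have eq: "l *\<^sub>R w + (1 - l) *\<^sub>R z = y"
  proof -
    have "l * (r / d) = 1 - l" using d r by (simp add: l_def field_simps)
    have "l *\<^sub>R w + (1 - l) *\<^sub>R z = l *\<^sub>R y + (l * (r / d)) *\<^sub>R (y - z) + (1 - l) *\<^sub>R z"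
      by (simp add: w_def algebra_simps)
    also have "\<dots> = y + (l * (r / d) - (1 - l)) *\<^sub>R (y - z)" by (simp add: algebra_simps)
    also have "\<dots> = y" using \<open>l * (r / d) = 1 - l\<close> by simp
    finally show ?thesis .
  qed
  have "T (l *\<^sub>R w + (1 - l) *\<^sub>R z) - T z \<le> l *\<^sub>R (T w - T z)"
    by (rule convex_ineq[OF cv l])
  then show ?thesis using eq by (simp add: l_def w_def d_def)
qed

lemma convex_lip:
  fixes T :: "'a::banach_lattice \<Rightarrow> 'a"
  assumes cv: "convex_op T" and r: "0 < r"
    and bd: "\<And>u. u \<in> cball x0 (2 * r) \<Longrightarrow> norm (T u) \<le> M"
    and y: "y \<in> cball x0 r" and z: "z \<in> cball x0 r"
  shows "norm (T y - T z) \<le> (4 * M / r) * norm (y - z)"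
proof (cases "y = z")
  case True
  have "norm (T x0) \<le> M" using bd r by simp
  then have "0 \<le> M" using norm_ge_zero[of "T x0"] by linarith
  then show ?thesis using True by simp
next
  case False
  define d where "d = norm (y - z)"
  have d: "0 < d" using False by (simp add: d_def)
  have dzy: "norm (z - y) = d" by (simp add: d_def norm_minus_commute)
  define w where "w = y + (r / d) *\<^sub>R (y - z)"
  define w' where "w' = z + (r / d) *\<^sub>R (z - y)"
  have wc: "w \<in> cball x0 (2 * r)"
  proof -
    have "dist x0 w = norm ((x0 - y) - (r / d) *\<^sub>R (y - z))" by (simp add: dist_norm w_def algebra_simps)
    also have "\<dots> \<le> dist x0 y + norm ((r / d) *\<^sub>R (y - z))" by (metis dist_norm norm_triangle_ineq4)
    also have "norm ((r / d) *\<^sub>R (y - z)) = r" using d r by (simp add: d_def)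
    finally show ?thesis using y by simp
  qed
  have wc': "w' \<in> cball x0 (2 * r)"
  proof -
    have "dist x0 w' = norm ((x0 - z) - (r / d) *\<^sub>R (z - y))" by (simp add: dist_norm w'_def algebra_simps)
    also have "\<dots> \<le> dist x0 z + norm ((r / d) *\<^sub>R (z - y))" by (metis dist_norm norm_triangle_ineq4)
    also have "norm ((r / d) *\<^sub>R (z - y)) = r" using d r dzy by simp
    finally show ?thesis using z by simp
  qed
  define l where "l = d / (r + d)"
  have l0: "0 \<le> l" using d r by (simp add: l_def)
  have lr: "l \<le> d / r" unfolding l_def using d r by (intro divide_left_mono) auto
  have up: "T y - T z \<le> l *\<^sub>R (T w - T z)"
    using convex_half_lip[OF cv r, of y z] by (simp add: l_def w_def d_def)
  have lo': "T z - T y \<le> l *\<^sub>R (T w' - T y)"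
    using convex_half_lip[OF cv r, of z y] dzy by (simp add: l_def w'_def)
  have "- (l *\<^sub>R (T w' - T y)) \<le> - (T z - T y)" using lo' by (simp only: neg_le_iff_le)
  then have lo: "- (l *\<^sub>R (T w' - T y)) \<le> T y - T z" by simp
  have yc2: "y \<in> cball x0 (2*r)" "z \<in> cball x0 (2*r)" using y z r by auto
  have "norm (T y - T z) \<le> norm (- (l *\<^sub>R (T w' - T y))) + norm (l *\<^sub>R (T w - T z))"
    by (rule sandwich_norm[OF lo up])
  also have "\<dots> \<le> l * (2 * M) + l * (2 * M)"
  proof -
    have "norm (T w' - T y) \<le> 2 * M" using bd[OF wc'] bd[OF yc2(1)] norm_triangle_ineq4[of "T w'" "T y"] by linarith
    moreover have "norm (T w - T z) \<le> 2 * M" using bd[OF wc] bd[OF yc2(2)] norm_triangle_ineq4[of "T w" "T z"] by linarith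
    ultimately have "l * norm (T w' - T y) \<le> l * (2 * M)" "l * norm (T w - T z) \<le> l * (2 * M)"
      using l0 by (simp_all add: mult_left_mono)
    moreover have "norm (- (l *\<^sub>R (T w' - T y))) = l * norm (T w' - T y)"
      "norm (l *\<^sub>R (T w - T z)) = l * norm (T w - T z)" using l0 by simp_all
    ultimately show ?thesis by linarith
  qed
  also have "\<dots> \<le> (d / r) * (4 * M)"
  proof -
    have "0 \<le> M" using bd[OF yc2(1)] norm_ge_zero[of "T y"] by linarith
    then have "l * (4 * M) \<le> (d / r) * (4 * M)" using lr by (intro mult_right_mono) auto
    then show ?thesis by (simp add: algebra_simps)
  qed
  finally show ?thesis using r by (simp add: d_def field_simps)
qed

lemma convex_bounded_continuous:
  fixes T :: "'a::banach_lattice \<Rightarrow> 'a"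
  assumes cv: "convex_op T" and bd: "bounded_op T"
  shows "continuous_on UNIV T"
proof -
  have "isCont T x" for x
  proof -
    define R where "R = norm x + 1"
    have R: "0 < R" unfolding R_def using norm_ge_zero[of x] by linarith
    obtain M where M: "\<And>u. norm u \<le> 2 * R \<Longrightarrow> norm (T u) \<le> M"
      using bd R unfolding bounded_op_def by (meson mult_pos_pos zero_less_numeral)
    have "norm (T 0) \<le> M" using M[of 0] R by simp
    then have M0: "0 \<le> M" using norm_ge_zero[of "T 0"] by linarith
    have bd2: "norm (T u) \<le> M" if "u \<in> cball 0 (2 * R)" for u using M that by simp
    have "(4 * M / R)-lipschitz_on (ball x 1) T"
    proof (rule lipschitz_onI)
      fix y z assume "y \<in> ball x 1" "z \<in> ball x 1"
      then have "norm (x - y) < 1" "norm (x - z) < 1" by (auto simp: dist_norm)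
      moreover have "norm y \<le> norm x + norm (y - x)" "norm z \<le> norm x + norm (z - x)"
        using norm_triangle_sub by blast+
      ultimately have "y \<in> cball 0 R" "z \<in> cball 0 R" unfolding R_def
        by (auto simp: norm_minus_commute)
      from convex_lip[OF cv R bd2 this] show "dist (T y) (T z) \<le> 4 * M / R * dist y z"
        by (simp add: dist_norm)
    next
      show "0 \<le> 4 * M / R" using M0 R by simp
    qed
    then have "continuous_on (ball x 1) T" by (rule lipschitz_on_continuous_on)
    then show ?thesis by (simp add: continuous_on_eq_continuous_at)
  qed
  then show ?thesis by (simp add: continuous_at_imp_continuous_on)
qed



lemma half_sum_scaleR: "(1/2::real) *\<^sub>R x + (1/2::real) *\<^sub>R x = (x::'a::real_vector)"
proof -
  have "((1/2::real) + 1/2) *\<^sub>R x = x" by simp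
  then show ?thesis by (simp only: scaleR_add_left)
qed

lemma two_trick:
  fixes a b c :: "'a::banach_lattice"
  assumes "2 *\<^sub>R (a - b) \<le> 2 *\<^sub>R ((1/2::real) *\<^sub>R (c - b))"
  shows "2 *\<^sub>R a - c \<le> b"
proof -
  have e1: "2 *\<^sub>R ((1/2::real) *\<^sub>R (c - b)) = c - b" by simp
  have "2 *\<^sub>R (a - b) + (2 *\<^sub>R b - c) \<le> (c - b) + (2 *\<^sub>R b - c)"
    using assms unfolding e1 by (rule add_right_mono)
  moreover have "2 *\<^sub>R (a - b) + (2 *\<^sub>R b - c) = 2 *\<^sub>R a - c" by (simp add: scaleR_diff_right)
  moreover have "(c - b) + (2 *\<^sub>R b - c) = b" by (simp add: scaleR_2)
  ultimately show ?thesis by simp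
qed

lemma convex_opD:
  "convex_op T \<Longrightarrow> 0 \<le> l \<Longrightarrow> l \<le> 1 \<Longrightarrow> T (l *\<^sub>R a + (1 - l) *\<^sub>R b) \<le> l *\<^sub>R T a + (1 - l) *\<^sub>R T b"
  unfolding convex_op_def by blast

lemma sc_small:
  assumes C: "convex_C0_semigroup S" and e: "0 < e"
  shows "\<exists>\<tau>>0. \<forall>t. 0 \<le> t \<and> t \<le> \<tau> \<longrightarrow> norm (S t z - z) < e"
proof -
  have "((\<lambda>t. S t z) \<longlongrightarrow> z) (at_right 0)" using C unfolding convex_C0_semigroup_def by blast
  then have "eventually (\<lambda>t. dist (S t z) z < e) (at_right 0)" using e by (rule tendstoD)
  then obtain b where b: "b > 0" "\<And>t. 0 < t \<Longrightarrow> t < b \<Longrightarrow> dist (S t z) z < e"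
    unfolding eventually_at_right_field by auto
  have S0: "S 0 = id" using C unfolding convex_C0_semigroup_def by blast
  show ?thesis
  proof (intro exI[of _ "b/2"] conjI allI impI)
    fix t assume t: "0 \<le> t \<and> t \<le> b / 2"
    show "norm (S t z - z) < e"
    proof (cases "t = 0")
      case True then show ?thesis using S0 e by simp
    next
      case False then show ?thesis using b(2)[of t] t b(1) by (simp add: dist_norm)
    qed
  qed (use b in auto)
qed

lemma S_cont:
  assumes C: "convex_C0_semigroup S" and t: "0 \<le> t"
  shows "continuous_on UNIV (S t)"
  using C t unfolding convex_C0_semigroup_def by (intro convex_bounded_continuous) auto

lemma local_bound:
  fixes S :: "real \<Rightarrow> 'a::banach_lattice \<Rightarrow> 'a"
  assumes C: "convex_C0_semigroup S"
  shows "\<exists>r>0. \<exists>t0>0. \<exists>M. \<forall>t. 0 \<le> t \<and> t \<le> t0 \<longrightarrow> (\<forall>z\<in>cball x r. norm (S t z) \<le> M)"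
proof -
  define F where "F = (\<lambda>(m::nat, k::nat). {z. \<forall>t\<in>{0..1 / real (Suc k)}. norm (S t z) \<le> real m})"
  have clo: "closed (F mk)" for mk
  proof -
    obtain m k where mk: "mk = (m, k)" by fastforce
    have "F mk = (\<Inter>t\<in>{0..1 / real (Suc k)}. {z. norm (S t z) \<le> real m})"
      by (auto simp: F_def mk)
    moreover have "closed {z. norm (S t z) \<le> real m}" if "t \<in> {0..1 / real (Suc k)}" for t
      using that S_cont[OF C, of t]
      by (intro closed_Collect_le continuous_on_norm continuous_on_const) auto
    ultimately show ?thesis by (simp add: closed_INT)
  qed
  have cover: "\<exists>mk. z \<in> F mk" for z
  proof -
    obtain \<tau> where tau: "\<tau> > 0" "\<And>t. 0 \<le> t \<and> t \<le> \<tau> \<Longrightarrow> norm (S t z - z) < 1"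
      using sc_small[OF C, of 1 z] by auto
    obtain k where k: "1 / real (Suc k) < \<tau>" using tau(1)
      by (metis lessThan_iff nat_approx_posE)
    obtain m where m: "norm z + 1 \<le> real m" using real_arch_simple by blast
    have "z \<in> F (m, k)"
    proof -
      have "norm (S t z) \<le> real m" if "t \<in> {0..1 / real (Suc k)}" for t
      proof -
        have "norm (S t z - z) < 1" using tau(2)[of t] that k by auto
        moreover have "norm (S t z) \<le> norm (S t z - z) + norm z" using norm_triangle_sub[of "S t z" z] by linarith
        ultimately show ?thesis using m by linarith
      qed
      then show ?thesis by (auto simp: F_def)
    qed
    then show ?thesis by blast
  qed
  have "\<exists>mk. interior (F mk) \<noteq> {}"
  proof (rule ccontr)
    assume "\<not> ?thesis"
    then have "euclidean interior_of \<Union>(range F) = {}"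
      using clo by (intro Baire_category_alt) (auto simp: completely_metrizable_space_euclidean closed_closedin[symmetric])
    moreover have "\<Union>(range F) = UNIV" using cover by blast
    ultimately show False by simp
  qed
  then obtain m k z0 where "z0 \<in> interior (F (m, k))" by auto
  then obtain \<rho> where rho: "\<rho> > 0" "ball z0 \<rho> \<subseteq> F (m, k)" by (meson mem_interior)
  define t1 where "t1 = 1 / real (Suc k)"
  have t1: "t1 > 0" by (simp add: t1_def)
  have Fb: "norm (S t u) \<le> real m" if "u \<in> ball z0 \<rho>" "0 \<le> t" "t \<le> t1" for t u
    using rho(2) that by (auto simp: F_def t1_def)
  define p where "p = x + (x - z0)"
  obtain \<tau>p where tp: "\<tau>p > 0" "\<And>t. 0 \<le> t \<and> t \<le> \<tau>p \<Longrightarrow> norm (S t p - p) < 1"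
    using sc_small[OF C, of 1 p] by auto
  obtain \<tau>x where tx: "\<tau>x > 0" "\<And>t. 0 \<le> t \<and> t \<le> \<tau>x \<Longrightarrow> norm (S t x - x) < 1"
    using sc_small[OF C, of 1 x] by auto
  define t0 where "t0 = min t1 (min \<tau>p \<tau>x)"
  have t0: "t0 > 0" using t1 tp tx by (simp add: t0_def)
  define M where "M = 2 * (norm x + 1) + (norm p + 1) + real m"
  have main: "norm (S t z) \<le> M" if t: "0 \<le> t" "t \<le> t0" and z: "z \<in> cball x (\<rho> / 4)" for t z
  proof -
    have cv: "convex_op (S t)" using C t unfolding convex_C0_semigroup_def by blast
    define u where "u = z - x"
    have u: "norm u \<le> \<rho> / 4" using z by (simp add: u_def dist_norm norm_minus_commute)
    have Sp: "norm (S t p) \<le> norm p + 1"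
      using tp(2)[of t] t norm_triangle_sub[of "S t p" p] by (auto simp: t0_def)
    have Sx: "norm (S t x) \<le> norm x + 1"
      using tx(2)[of t] t norm_triangle_sub[of "S t x" x] by (auto simp: t0_def)
    define up where "up = (\<lambda>u. (1/2::real) *\<^sub>R S t p + (1 - 1/2::real) *\<^sub>R S t (z0 + 2 *\<^sub>R u))"
    have up_ge: "S t (x + u) \<le> up u" if "norm u \<le> \<rho> / 4" for u
    proof -
      have "x + u = (1/2::real) *\<^sub>R p + (1 - 1/2::real) *\<^sub>R (z0 + 2 *\<^sub>R u)"
      proof -
        have h: "(1/2::real) *\<^sub>R x + (1/2::real) *\<^sub>R x = x"
        proof -
  have "((1/2::real) + 1/2) *\<^sub>R x = x" by simp
  then show ?thesis by (simp only: scaleR_add_left)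
qed
        show ?thesis by (simp add: p_def algebra_simps h)
      qed
      then show ?thesis unfolding up_def by (subst (1) \<open>x + u = _\<close>) (rule convex_opD[OF cv]; simp)
    qed
    have up_norm: "norm (up u) \<le> (norm p + 1 + real m) / 2" if "norm u \<le> \<rho> / 4" for u
    proof -
      have "z0 + 2 *\<^sub>R u \<in> ball z0 \<rho>" using that rho(1) by (simp add: dist_norm)
      then have "norm (S t (z0 + 2 *\<^sub>R u)) \<le> real m" using Fb t by (auto simp: t0_def)
      moreover have "norm (up u) \<le> (1/2) * norm (S t p) + (1/2) * norm (S t (z0 + 2 *\<^sub>R u))"
        unfolding up_def using norm_triangle_ineq[of "(1/2::real) *\<^sub>R S t p" "(1 - 1/2::real) *\<^sub>R S t (z0 + 2 *\<^sub>R u)"]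
        by simp
      ultimately show ?thesis using Sp by argo
    qed
    have hi: "S t (x + u) \<le> up u" using up_ge u by blast
    have lo1: "S t x - S t (x + u) \<le> (1/2::real) *\<^sub>R (S t (x - u) - S t (x + u))"
    proof -
      have "S t ((1/2::real) *\<^sub>R (x - u) + (1 - 1/2::real) *\<^sub>R (x + u)) - S t (x + u) \<le> (1/2::real) *\<^sub>R (S t (x - u) - S t (x + u))"
        by (rule convex_ineq[OF cv]) auto
      moreover have "(1/2::real) *\<^sub>R (x - u) + (1 - 1/2::real) *\<^sub>R (x + u) = x" using half_sum_scaleR[of x] by (simp add: algebra_simps)
      ultimately show ?thesis by simp
    qed
    have lo: "2 *\<^sub>R S t x - up (- u) \<le> S t (x + u)"
    proof -
      have "2 *\<^sub>R (S t x - S t (x + u)) \<le> 2 *\<^sub>R ((1/2::real) *\<^sub>R (S t (x - u) - S t (x + u)))"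
        using lo1 by (intro scaleR_left_mono) auto
      then have a: "2 *\<^sub>R S t x - S t (x - u) \<le> S t (x + u)" by (rule two_trick)
      have "S t (x - u) \<le> up (- u)" using up_ge[of "- u"] u by simp
      then have "2 *\<^sub>R S t x - up (- u) \<le> 2 *\<^sub>R S t x - S t (x - u)" by (rule diff_left_mono)
      then show ?thesis using a by (rule order_trans)
    qed
    have "norm (S t (x + u)) \<le> norm (2 *\<^sub>R S t x - up (- u)) + norm (up u)"
      by (rule sandwich_norm[OF lo hi])
    also have "\<dots> \<le> 2 * norm (S t x) + norm (up (- u)) + norm (up u)"
      using norm_triangle_ineq4[of "2 *\<^sub>R S t x" "up (- u)"] by simp
    also have "\<dots> \<le> M"
      using Sx up_norm[of u] up_norm[of "- u"] u unfolding M_def by simp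
    finally show ?thesis by (simp add: u_def)
  qed
  show ?thesis
    using rho(1) t0 main by (intro exI[of _ "\<rho> / 4"] conjI exI[of _ t0] exI[of _ M]) auto
qed

lemma local_lip:
  fixes S :: "real \<Rightarrow> 'a::banach_lattice \<Rightarrow> 'a"
  assumes C: "convex_C0_semigroup S"
  shows "\<exists>r>0. \<exists>t0>0. \<exists>L\<ge>0. \<forall>t. 0 \<le> t \<and> t \<le> t0 \<longrightarrow>
           (\<forall>a\<in>cball x r. \<forall>b\<in>cball x r. norm (S t a - S t b) \<le> L * norm (a - b))"
proof -
  obtain r t0 M where r: "r > 0" "t0 > 0" and M: "\<And>t z. 0 \<le> t \<Longrightarrow> t \<le> t0 \<Longrightarrow> z \<in> cball x r \<Longrightarrow> norm (S t z) \<le> M"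
    using local_bound[OF C, of x] by blast
  have "norm (S 0 x) \<le> M" using M[of 0 x] r by simp
  then have M0: "0 \<le> M" using norm_ge_zero[of "S 0 x"] by linarith
  have "norm (S t a - S t b) \<le> (4 * M / (r/2)) * norm (a - b)"
    if t: "0 \<le> t" "t \<le> t0" and a: "a \<in> cball x (r/2)" and b: "b \<in> cball x (r/2)" for t a b
  proof -
    have cv: "convex_op (S t)" using C t unfolding convex_C0_semigroup_def by blast
    show ?thesis by (rule convex_lip[OF cv _ _ a b]) (use r M t in auto)
  qed
  then show ?thesis using r M0
    by (intro exI[of _ "r/2"] conjI exI[of _ t0] exI[of _ "4 * M / (r/2)"]) auto
qed



lemma key:
  fixes S :: "real \<Rightarrow> 'a::banach_lattice \<Rightarrow> 'a"
  assumes C: "convex_C0_semigroup S"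
    and lip: "\<And>t a b. 0 \<le> t \<Longrightarrow> t \<le> t0 \<Longrightarrow> a \<in> cball x r \<Longrightarrow> b \<in> cball x r \<Longrightarrow> norm (S t a - S t b) \<le> L * norm (a - b)"
    and L: "0 \<le> L"
    and w: "dist x w < r"
    and der: "((\<lambda>h. (1/h) *\<^sub>R (S h w - w)) \<longlongrightarrow> v) (at_right 0)"
    and h: "0 < h" "h \<le> t0" "h \<le> 1"
    and B1: "\<And>t. 0 \<le> t \<Longrightarrow> t \<le> h \<Longrightarrow> norm (S t (w + v) - S t w - v) \<le> B1"
    and B2: "\<And>t. 0 \<le> t \<Longrightarrow> t \<le> h \<Longrightarrow> norm (S t w - S t (w - v) - v) \<le> B2"
  shows "norm ((1/h) *\<^sub>R (S h w - w) - v) \<le> B1 + B2"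
proof (rule field_le_epsilon)
  fix e :: real assume e: "0 < e"
  have semi: "\<And>s t. 0 \<le> s \<Longrightarrow> 0 \<le> t \<Longrightarrow> S (t + s) = S t \<circ> S s"
    using C unfolding convex_C0_semigroup_def by blast
  have cvx: "\<And>t. 0 \<le> t \<Longrightarrow> convex_op (S t)"
    using C unfolding convex_C0_semigroup_def by blast
  have S0: "S 0 = id" using C unfolding convex_C0_semigroup_def by blast
  define \<rho> where "\<rho> = r - dist x w"
  have rho: "0 < \<rho>" using w by (simp add: \<rho>_def)
  define e1 where "e1 = e / (L + 1)"
  have e1: "0 < e1" "L * e1 \<le> e" using e L by (auto simp: e1_def field_simps)
  have ev1: "eventually (\<lambda>\<delta>. norm ((1/\<delta>) *\<^sub>R (S \<delta> w - w) - v) < e1) (at_right 0)"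
    using tendstoD[OF der e1(1)] by (simp add: dist_norm)
  have "((\<lambda>t. S t w) \<longlongrightarrow> w) (at_right 0)" using C unfolding convex_C0_semigroup_def by blast
  from tendstoD[OF this rho]
  have ev2: "eventually (\<lambda>\<delta>. norm (S \<delta> w - w) < \<rho>) (at_right 0)" by (simp add: dist_norm)
  have "((\<lambda>\<delta>::real. \<delta> *\<^sub>R v) \<longlongrightarrow> 0 *\<^sub>R v) (at_right 0)"
    by (intro tendsto_scaleR tendsto_ident_at tendsto_const)
  from tendstoD[OF this rho]
  have ev3: "eventually (\<lambda>\<delta>. norm (\<delta> *\<^sub>R v) < \<rho>) (at_right 0)" by (simp add: dist_norm)
  have "eventually (\<lambda>\<delta>. norm ((1/\<delta>) *\<^sub>R (S \<delta> w - w) - v) < e1 \<and> norm (S \<delta> w - w) < \<rho> \<and> norm (\<delta> *\<^sub>R v) < \<rho>) (at_right 0)"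
    using ev1 ev2 ev3 by eventually_elim auto
  then obtain b where b: "b > 0" and bP: "\<And>\<delta>. 0 < \<delta> \<Longrightarrow> \<delta> < b \<Longrightarrow>
      norm ((1/\<delta>) *\<^sub>R (S \<delta> w - w) - v) < e1 \<and> norm (S \<delta> w - w) < \<rho> \<and> norm (\<delta> *\<^sub>R v) < \<rho>"
    unfolding eventually_at_right_field by auto
  obtain m :: nat where m: "h / b < real m" using reals_Archimedean2 by blast
  have m0: "0 < real m" using m h b by (smt (verit) divide_pos_pos)
  define \<delta> where "\<delta> = h / real m"
  have d0: "0 < \<delta>" using h m0 by (simp add: \<delta>_def)
  have db: "\<delta> < b" using m b m0 h by (simp add: \<delta>_def field_simps)
  have mdh: "real m * \<delta> = h" using m0 by (simp add: \<delta>_def)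
  have dh: "\<delta> \<le> h"
  proof -
    have "0 < m" using m0 by simp
    then have "1 \<le> real m" by simp
    then have "h * 1 \<le> h * real m" using h by (intro mult_left_mono) auto
    then show ?thesis using m0 by (simp add: \<delta>_def field_simps)
  qed
  have d1: "\<delta> \<le> 1" using dh h by simp
  from bP[OF d0 db] have n1: "norm ((1/\<delta>) *\<^sub>R (S \<delta> w - w) - v) < e1"
    and n2: "norm (S \<delta> w - w) < \<rho>" and n3: "norm (\<delta> *\<^sub>R v) < \<rho>" by auto
  have Sdw: "S \<delta> w \<in> cball x r"
  proof -
    have "dist x (S \<delta> w) \<le> dist x w + dist w (S \<delta> w)" by (rule dist_triangle)
    then show ?thesis using n2 by (simp add: \<rho>_def dist_norm norm_minus_commute)
  qed
  have wdv: "w + \<delta> *\<^sub>R v \<in> cball x r"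
  proof -
    have "dist x (w + \<delta> *\<^sub>R v) \<le> dist x w + dist w (w + \<delta> *\<^sub>R v)" by (rule dist_triangle)
    then show ?thesis using n3 by (simp add: \<rho>_def dist_norm)
  qed
  have tk: "0 \<le> real k * \<delta>" "real k * \<delta> \<le> h" if "k < m" for k
  proof -
    show "0 \<le> real k * \<delta>" using d0 by simp
    have "real k * \<delta> \<le> real m * \<delta>" using that d0 by (intro mult_right_mono) auto
    then show "real k * \<delta> \<le> h" using mdh by simp
  qed
  define f where "f k = S (real k * \<delta>) w" for k
  define D where "D k = S (real k * \<delta>) (w + \<delta> *\<^sub>R v) - S (real k * \<delta>) w" for k
  have fS: "f (Suc k) = S (real k * \<delta>) (S \<delta> w)" for k
  proof -
    have "real (Suc k) * \<delta> = real k * \<delta> + \<delta>" by (simp add: algebra_simps)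
    then show ?thesis unfolding f_def using semi[of \<delta> "real k * \<delta>"] d0 by simp
  qed
  have f0: "f 0 = w" using S0 by (simp add: f_def)
  have fm: "f m = S h w" using mdh by (simp add: f_def)
  have Sh: "S h w - w = (\<Sum>k<m. f (Suc k) - f k)"
    using sum_lessThan_telescope[of f m] f0 fm by simp
  have err_eq: "(S h w - w) - (\<Sum>k<m. D k) = (\<Sum>k<m. S (real k * \<delta>) (S \<delta> w) - S (real k * \<delta>) (w + \<delta> *\<^sub>R v))"
    unfolding Sh sum_subtractf[symmetric] by (intro sum.cong refl, simp only: fS, simp add: f_def D_def)
  have err: "norm ((S h w - w) - (\<Sum>k<m. D k)) \<le> h * (L * e1)"
  proof -
    have "norm ((S h w - w) - (\<Sum>k<m. D k)) \<le> (\<Sum>k<m. norm (S (real k * \<delta>) (S \<delta> w) - S (real k * \<delta>) (w + \<delta> *\<^sub>R v)))"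
      unfolding err_eq by (rule norm_sum)
    also have "\<dots> \<le> (\<Sum>k<m. L * norm (S \<delta> w - (w + \<delta> *\<^sub>R v)))"
    proof (rule sum_mono)
      fix k assume "k \<in> {..<m}"
      then have "k < m" by simp
      show "norm (S (real k * \<delta>) (S \<delta> w) - S (real k * \<delta>) (w + \<delta> *\<^sub>R v)) \<le> L * norm (S \<delta> w - (w + \<delta> *\<^sub>R v))"
        by (rule lip[OF tk(1)[OF \<open>k < m\<close>] _ Sdw wdv]) (use tk(2)[OF \<open>k < m\<close>] h in simp)
    qed
    also have "\<dots> = real m * (L * norm (S \<delta> w - (w + \<delta> *\<^sub>R v)))" by simp
    also have "norm (S \<delta> w - (w + \<delta> *\<^sub>R v)) = \<delta> * norm ((1/\<delta>) *\<^sub>R (S \<delta> w - w) - v)"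
    proof -
      have "S \<delta> w - (w + \<delta> *\<^sub>R v) = \<delta> *\<^sub>R ((1/\<delta>) *\<^sub>R (S \<delta> w - w) - v)"
        using d0 by (simp add: algebra_simps)
      then show ?thesis using d0 by simp
    qed
    also have "real m * (L * (\<delta> * norm ((1/\<delta>) *\<^sub>R (S \<delta> w - w) - v))) = h * (L * norm ((1/\<delta>) *\<^sub>R (S \<delta> w - w) - v))"
      using mdh by (simp add: algebra_simps)
    also have "\<dots> \<le> h * (L * e1)"
      using n1 h L by (intro mult_left_mono) auto
    finally show ?thesis .
  qed
  define up where "up k = S (real k * \<delta>) (w + v) - S (real k * \<delta>) w - v" for k
  define lo where "lo k = S (real k * \<delta>) w - S (real k * \<delta>) (w - v) - v" for k
  have upk: "D k - \<delta> *\<^sub>R v \<le> \<delta> *\<^sub>R up k" if "k < m" for k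
  proof -
    have "S (real k * \<delta>) (\<delta> *\<^sub>R (w + v) + (1 - \<delta>) *\<^sub>R w) - S (real k * \<delta>) w \<le> \<delta> *\<^sub>R (S (real k * \<delta>) (w + v) - S (real k * \<delta>) w)"
      by (rule convex_ineq[OF cvx[OF tk(1)[OF that]]]) (use d0 d1 in auto)
    moreover have "\<delta> *\<^sub>R (w + v) + (1 - \<delta>) *\<^sub>R w = w + \<delta> *\<^sub>R v" by (simp add: algebra_simps)
    ultimately have "D k \<le> \<delta> *\<^sub>R (S (real k * \<delta>) (w + v) - S (real k * \<delta>) w)" by (simp add: D_def)
    then have "D k - \<delta> *\<^sub>R v \<le> \<delta> *\<^sub>R (S (real k * \<delta>) (w + v) - S (real k * \<delta>) w) - \<delta> *\<^sub>R v"
      by (rule diff_right_mono)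
    then show ?thesis by (simp add: up_def scaleR_diff_right)
  qed
  have lok: "\<delta> *\<^sub>R lo k \<le> D k - \<delta> *\<^sub>R v" if "k < m" for k
  proof -
    have "\<delta> *\<^sub>R (S (real k * \<delta>) w - S (real k * \<delta>) (w - v)) \<le> D k"
      unfolding D_def by (rule convex_ineq_lower[OF cvx[OF tk(1)[OF that]]]) (use d0 in auto)
    then have "\<delta> *\<^sub>R (S (real k * \<delta>) w - S (real k * \<delta>) (w - v)) - \<delta> *\<^sub>R v \<le> D k - \<delta> *\<^sub>R v"
      by (rule diff_right_mono)
    then show ?thesis by (simp add: lo_def scaleR_diff_right)
  qed
  have sum_mid: "(\<Sum>k<m. D k - \<delta> *\<^sub>R v) = (\<Sum>k<m. D k) - h *\<^sub>R v"
  proof -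
    have "(\<Sum>k<m. \<delta> *\<^sub>R v) = real m *\<^sub>R (\<delta> *\<^sub>R v)" by (simp add: sum_constant_scaleR)
    also have "\<dots> = h *\<^sub>R v" using mdh by (simp add: scaleR_scaleR)
    finally show ?thesis by (simp add: sum_subtractf)
  qed
  have s_up: "(\<Sum>k<m. D k) - h *\<^sub>R v \<le> (\<Sum>k<m. \<delta> *\<^sub>R up k)"
    unfolding sum_mid[symmetric] by (rule sum_mono) (use upk in simp)
  have s_lo: "(\<Sum>k<m. \<delta> *\<^sub>R lo k) \<le> (\<Sum>k<m. D k) - h *\<^sub>R v"
    unfolding sum_mid[symmetric] by (rule sum_mono) (use lok in simp)
  have mid_eq: "(1/h) *\<^sub>R ((\<Sum>k<m. D k) - h *\<^sub>R v) = (1/h) *\<^sub>R (\<Sum>k<m. D k) - v"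
    using h by (simp add: scaleR_diff_right)
  have hi2: "(1/h) *\<^sub>R (\<Sum>k<m. D k) - v \<le> (1/h) *\<^sub>R (\<Sum>k<m. \<delta> *\<^sub>R up k)"
    unfolding mid_eq[symmetric] using s_up h by (intro scaleR_left_mono) auto
  have lo2: "(1/h) *\<^sub>R (\<Sum>k<m. \<delta> *\<^sub>R lo k) \<le> (1/h) *\<^sub>R (\<Sum>k<m. D k) - v"
    unfolding mid_eq[symmetric] using s_lo h by (intro scaleR_left_mono) auto
  have avg: "norm ((1/h) *\<^sub>R (\<Sum>k<m. \<delta> *\<^sub>R g k)) \<le> B"
    if g: "\<And>k. k < m \<Longrightarrow> norm (g k) \<le> B" for g :: "nat \<Rightarrow> 'a" and B
  proof -
    have "norm ((1/h) *\<^sub>R (\<Sum>k<m. \<delta> *\<^sub>R g k)) = (1/h) * norm (\<Sum>k<m. \<delta> *\<^sub>R g k)"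
      using h by simp
    also have "norm (\<Sum>k<m. \<delta> *\<^sub>R g k) \<le> (\<Sum>k<m. norm (\<delta> *\<^sub>R g k))" by (rule norm_sum)
    also have "\<dots> \<le> (\<Sum>k<m. \<delta> * B)"
      by (rule sum_mono) (use g d0 in \<open>auto intro: mult_left_mono\<close>)
    also have "\<dots> = h * B" using mdh by simp
    finally show ?thesis using h by (simp add: divide_right_mono)
  qed
  have nup: "norm ((1/h) *\<^sub>R (\<Sum>k<m. \<delta> *\<^sub>R up k)) \<le> B1"
    by (rule avg) (use B1 tk in \<open>auto simp: up_def\<close>)
  have nlo: "norm ((1/h) *\<^sub>R (\<Sum>k<m. \<delta> *\<^sub>R lo k)) \<le> B2"
    by (rule avg) (use B2 tk in \<open>auto simp: lo_def\<close>)
  have mid: "norm ((1/h) *\<^sub>R (\<Sum>k<m. D k) - v) \<le> B2 + B1"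
    using sandwich_norm[OF lo2 hi2] nup nlo by linarith
  have "(1/h) *\<^sub>R (S h w - w) - v = (1/h) *\<^sub>R ((S h w - w) - (\<Sum>k<m. D k)) + ((1/h) *\<^sub>R (\<Sum>k<m. D k) - v)"
    by (simp add: algebra_simps)
  then have "norm ((1/h) *\<^sub>R (S h w - w) - v) \<le> norm ((1/h) *\<^sub>R ((S h w - w) - (\<Sum>k<m. D k))) + norm ((1/h) *\<^sub>R (\<Sum>k<m. D k) - v)"
    by (metis norm_triangle_ineq)
  also have "norm ((1/h) *\<^sub>R ((S h w - w) - (\<Sum>k<m. D k))) \<le> L * e1"
  proof -
    have "norm ((1/h) *\<^sub>R ((S h w - w) - (\<Sum>k<m. D k))) = (1/h) * norm ((S h w - w) - (\<Sum>k<m. D k))"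
      using h by simp
    also have "\<dots> \<le> (1/h) * (h * (L * e1))" using err h by (intro mult_left_mono) auto
    also have "\<dots> = L * e1" using h by simp
    finally show ?thesis .
  qed
  finally show "norm ((1/h) *\<^sub>R (S h w - w) - v) \<le> B1 + B2 + e" using mid e1 by linarith
qed



lemma norm5: "norm (a - b + c - d + e) \<le> norm a + norm b + norm c + norm d + norm (e::'a::real_normed_vector)"
proof -
  have "norm (a - b + c - d + e) \<le> norm (a - b + c - d) + norm e" by (rule norm_triangle_ineq)
  moreover have "norm (a - b + c - d) \<le> norm (a - b + c) + norm d" by (rule norm_triangle_ineq4)
  moreover have "norm (a - b + c) \<le> norm (a - b) + norm c" by (rule norm_triangle_ineq)
  moreover have "norm (a - b) \<le> norm a + norm b" by (rule norm_triangle_ineq4)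
  ultimately show ?thesis by linarith
qed

lemma norm3: "norm (a + b + c) \<le> norm a + norm b + norm (c::'a::real_normed_vector)"
proof -
  have "norm (a + b + c) \<le> norm (a + b) + norm c" by (rule norm_triangle_ineq)
  moreover have "norm (a + b) \<le> norm a + norm b" by (rule norm_triangle_ineq)
  ultimately show ?thesis by linarith
qed

lemma lip_weaken:
  assumes "0 \<le> (t::real)" "t \<le> t0" "a \<in> cball p r" "b \<in> cball p r" "r \<le> r1" "t0 \<le> t1" "L1 \<le> L"
    and H: "\<forall>t. 0 \<le> t \<and> t \<le> t1 \<longrightarrow> (\<forall>a\<in>cball p r1. \<forall>b\<in>cball p r1. norm (S t a - S t b) \<le> L1 * norm (a - (b::'a::real_normed_vector)))"
  shows "norm (S t a - S t b) \<le> L * norm (a - b)"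
proof -
  have "a \<in> cball p r1" "b \<in> cball p r1" using assms(3,4,5) by auto
  moreover have "t \<le> t1" using assms(2,6) by simp
  ultimately have "norm (S t a - S t b) \<le> L1 * norm (a - b)" using H assms(1) by blast
  also have "\<dots> \<le> L * norm (a - b)" using assms(7) by (intro mult_right_mono) auto
  finally show ?thesis .
qed

theorem proposition3p4:
  fixes S :: "real \<Rightarrow> 'a::banach_lattice \<Rightarrow> 'a"
    and xs :: "nat \<Rightarrow> 'a" and x y :: 'a
  assumes "order_continuous_norm TYPE('a)"
    and "convex_C0_semigroup S"
    and "\<And>n. xs n \<in> gen_domain S"
    and "xs \<longlonglongrightarrow> x"
    and "(\<lambda>n. generator S (xs n)) \<longlonglongrightarrow> y"
  shows "x \<in> gen_domain S \<and> generator S x = y"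
proof -
  note C = assms(2)
  define v where "v n = generator S (xs n)" for n
  have der: "((\<lambda>h. (1/h) *\<^sub>R (S h (xs n) - xs n)) \<longlongrightarrow> v n) (at_right 0)" for n
  proof -
    obtain y' where y': "((\<lambda>h. (1/h) *\<^sub>R (S h (xs n) - xs n)) \<longlongrightarrow> y') (at_right 0)"
      using assms(3)[of n] unfolding gen_domain_def by blast
    have "v n = y'" unfolding v_def generator_def by (rule tendsto_Lim) (use y' in auto)
    then show ?thesis using y' by simp
  qed
  have "v = (\<lambda>n. generator S (xs n))" by (rule ext) (simp add: v_def)
  then have vy: "v \<longlonglongrightarrow> y" using assms(5) by simp
  obtain r1 t1 L1 where R1: "r1 > 0" "t1 > 0" "L1 \<ge> 0" and H1: "\<forall>t. 0 \<le> t \<and> t \<le> t1 \<longrightarrow>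
           (\<forall>a\<in>cball x r1. \<forall>b\<in>cball x r1. norm (S t a - S t b) \<le> L1 * norm (a - b))"
    using local_lip[OF C, of x] by blast
  obtain r2 t2 L2 where R2: "r2 > 0" "t2 > 0" "L2 \<ge> 0" and H2: "\<forall>t. 0 \<le> t \<and> t \<le> t2 \<longrightarrow>
           (\<forall>a\<in>cball (x + y) r2. \<forall>b\<in>cball (x + y) r2. norm (S t a - S t b) \<le> L2 * norm (a - b))"
    using local_lip[OF C, of "x + y"] by blast
  obtain r3 t3 L3 where R3: "r3 > 0" "t3 > 0" "L3 \<ge> 0" and H3: "\<forall>t. 0 \<le> t \<and> t \<le> t3 \<longrightarrow>
           (\<forall>a\<in>cball (x - y) r3. \<forall>b\<in>cball (x - y) r3. norm (S t a - S t b) \<le> L3 * norm (a - b))"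
    using local_lip[OF C, of "x - y"] by blast
  define r where "r = min r1 (min r2 r3)"
  define t0 where "t0 = min t1 (min t2 t3)"
  define L where "L = max L1 (max L2 L3)"
  have r: "0 < r" "r \<le> r1" "r \<le> r2" "r \<le> r3" using R1 R2 R3 by (auto simp: r_def)
  have t0: "0 < t0" "t0 \<le> t1" "t0 \<le> t2" "t0 \<le> t3" using R1 R2 R3 by (auto simp: t0_def)
  have L: "0 \<le> L" "L1 \<le> L" "L2 \<le> L" "L3 \<le> L" using R1 R2 R3 by (auto simp: L_def)
  have lip1: "\<And>t a b. 0 \<le> t \<Longrightarrow> t \<le> t0 \<Longrightarrow> a\<in>cball x r \<Longrightarrow> b\<in>cball x r \<Longrightarrow> norm (S t a - S t b) \<le> L * norm (a - b)"
    by (rule lip_weaken[OF _ _ _ _ _ _ _ H1]) (use r t0 L in auto)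
  have lip2: "\<And>t a b. 0 \<le> t \<Longrightarrow> t \<le> t0 \<Longrightarrow> a\<in>cball (x + y) r \<Longrightarrow> b\<in>cball (x + y) r \<Longrightarrow> norm (S t a - S t b) \<le> L * norm (a - b)"
    by (rule lip_weaken[OF _ _ _ _ _ _ _ H2]) (use r t0 L in auto)
  have lip3: "\<And>t a b. 0 \<le> t \<Longrightarrow> t \<le> t0 \<Longrightarrow> a\<in>cball (x - y) r \<Longrightarrow> b\<in>cball (x - y) r \<Longrightarrow> norm (S t a - S t b) \<le> L * norm (a - b)"
    by (rule lip_weaken[OF _ _ _ _ _ _ _ H3]) (use r t0 L in auto)
  define q where "q n = norm (xs n - x) + norm (v n - y)" for n
  have q0: "q \<longlonglongrightarrow> 0"
  proof -
    have "(\<lambda>n. norm (xs n - x)) \<longlonglongrightarrow> 0" using assms(4) by (intro tendsto_norm_zero LIM_zero)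
    moreover have "(\<lambda>n. norm (v n - y)) \<longlonglongrightarrow> 0" using vy by (intro tendsto_norm_zero LIM_zero)
    ultimately have "(\<lambda>n. norm (xs n - x) + norm (v n - y)) \<longlonglongrightarrow> 0 + 0" by (rule tendsto_add)
    then show ?thesis by (simp add: q_def[abs_def])
  qed
  have goal: "((\<lambda>h. (1/h) *\<^sub>R (S h x - x)) \<longlongrightarrow> y) (at_right 0)"
  proof (rule tendstoI)
    fix \<epsilon> :: real assume eps: "0 < \<epsilon>"
    define e where "e = \<epsilon> / 5"
    have e: "0 < e" using eps by (simp add: e_def)
    obtain \<tau>a where ta: "\<tau>a > 0" "\<And>t. 0 \<le> t \<and> t \<le> \<tau>a \<Longrightarrow> norm (S t (x + y) - (x + y)) < e"
      using sc_small[OF C e] by blast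
    obtain \<tau>b where tb: "\<tau>b > 0" "\<And>t. 0 \<le> t \<and> t \<le> \<tau>b \<Longrightarrow> norm (S t x - x) < e"
      using sc_small[OF C e] by blast
    obtain \<tau>c where tc: "\<tau>c > 0" "\<And>t. 0 \<le> t \<and> t \<le> \<tau>c \<Longrightarrow> norm (S t (x - y) - (x - y)) < e"
      using sc_small[OF C e] by blast
    define \<tau> where "\<tau> = min (min \<tau>a \<tau>b) (min \<tau>c (min t0 1))"
    have tau: "0 < \<tau>" "\<tau> \<le> \<tau>a" "\<tau> \<le> \<tau>b" "\<tau> \<le> \<tau>c" "\<tau> \<le> t0" "\<tau> \<le> 1"
      using ta tb tc t0 by (auto simp: \<tau>_def)
    have core: "norm ((1/h) *\<^sub>R (S h x - x) - y) \<le> 4 * e" if h: "0 < h" "h \<le> \<tau>" for h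
    proof (rule field_le_epsilon)
      fix \<eta> :: real assume eta: "0 < \<eta>"
      define K where "K = (2 * L + 2) * (1 + 1 / h)"
      have K: "0 < K" using L h by (simp add: K_def add_pos_pos)
      have "eventually (\<lambda>n. dist (q n) 0 < min r (\<eta> / (4 * K))) sequentially"
        using q0 r eta K by (intro tendstoD) auto
      then obtain n where "dist (q n) 0 < min r (\<eta> / (4 * K))"
        unfolding eventually_sequentially by blast
      then have qr: "q n < r" and qK: "K * q n < \<eta> / 4"
        using K by (auto simp: q_def field_simps)
      define w where "w = xs n"
      define vv where "vv = v n"
      have qw: "norm (w - x) \<le> q n" "norm (vv - y) \<le> q n" "norm (w + vv - (x + y)) \<le> q n" "norm (w - vv - (x - y)) \<le> q n"
      proof -
        show "norm (w - x) \<le> q n" "norm (vv - y) \<le> q n" by (auto simp: q_def w_def vv_def)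
        have "norm (w + vv - (x + y)) = norm ((w - x) + (vv - y))" by (simp add: algebra_simps)
        also have "\<dots> \<le> q n" unfolding q_def w_def vv_def by (rule norm_triangle_ineq)
        finally show "norm (w + vv - (x + y)) \<le> q n" .
        have "norm (w - vv - (x - y)) = norm ((w - x) - (vv - y))" by (simp add: algebra_simps)
        also have "\<dots> \<le> q n" unfolding q_def w_def vv_def by (rule norm_triangle_ineq4)
        finally show "norm (w - vv - (x - y)) \<le> q n" .
      qed
      have q0': "0 \<le> q n" by (simp add: q_def)
      have wx: "w \<in> cball x r" "x \<in> cball x r" using qw qr r by (auto simp: dist_norm norm_minus_commute)
      have wy2: "w + vv \<in> cball (x + y) r" "x + y \<in> cball (x + y) r" using qw qr r by (auto simp: dist_norm norm_minus_commute)
      have wy3: "w - vv \<in> cball (x - y) r" "x - y \<in> cball (x - y) r" using qw qr r by (auto simp: dist_norm norm_minus_commute)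
      have Kq: "2 * L * q n + q n \<le> K * q n" "(1/h) * ((L + 1) * q n) + q n \<le> K * q n"
      proof -
        have "2 * L + 1 \<le> K" using L h by (simp add: K_def algebra_simps)
        then have "(2 * L + 1) * q n \<le> K * q n" using q0' by (rule mult_right_mono)
        then show "2 * L * q n + q n \<le> K * q n" by (simp add: algebra_simps)
        have a: "(1/h) * (L + 1) \<le> (1/h) * (2 * L + 2)" using L h by (intro mult_left_mono) auto
        have "K = (2 * L + 2) + (1/h) * (2 * L + 2)" by (simp add: K_def algebra_simps)
        then have "(1/h) * (L + 1) + 1 \<le> K" using a L by linarith
        then have "((1/h) * (L + 1) + 1) * q n \<le> K * q n" using q0' by (rule mult_right_mono)
        moreover have "((1/h) * (L + 1) + 1) * q n = (1/h) * ((L + 1) * q n) + q n" by (simp add: algebra_simps add_divide_distrib)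
        ultimately show "(1/h) * ((L + 1) * q n) + q n \<le> K * q n" by simp
      qed
      have B1: "norm (S t (w + vv) - S t w - vv) \<le> 2 * e + \<eta> / 4" if t: "0 \<le> t" "t \<le> h" for t
      proof -
        have tt: "t \<le> t0" "t \<le> \<tau>a" "t \<le> \<tau>b" using t h tau by auto
        have eq: "S t (w + vv) - S t w - vv = (S t (w + vv) - S t (x + y)) - (S t w - S t x) + (S t (x + y) - (x + y)) - (S t x - x) + (y - vv)"
          by (simp add: algebra_simps)
        have "norm (S t (w + vv) - S t w - vv) \<le> norm (S t (w + vv) - S t (x + y)) + norm (S t w - S t x) + norm (S t (x + y) - (x + y)) + norm (S t x - x) + norm (y - vv)"
          unfolding eq by (rule norm5)
        moreover have "norm (S t (w + vv) - S t (x + y)) \<le> L * q n"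
          using order_trans[OF lip2[OF t(1) tt(1) wy2] mult_left_mono[OF qw(3) L(1)]] .
        moreover have "norm (S t w - S t x) \<le> L * q n"
          using order_trans[OF lip1[OF t(1) tt(1) wx] mult_left_mono[OF qw(1) L(1)]] .
        moreover have "norm (S t (x + y) - (x + y)) < e" using ta(2)[of t] t tt by auto
        moreover have "norm (S t x - x) < e" using tb(2)[of t] t tt by auto
        moreover have "norm (y - vv) \<le> q n" using qw(2) by (simp add: norm_minus_commute)
        ultimately show ?thesis using Kq(1) qK by linarith
      qed
      have B2: "norm (S t w - S t (w - vv) - vv) \<le> 2 * e + \<eta> / 4" if t: "0 \<le> t" "t \<le> h" for t
      proof -
        have tt: "t \<le> t0" "t \<le> \<tau>c" "t \<le> \<tau>b" using t h tau by auto
        have eq: "S t w - S t (w - vv) - vv = (S t w - S t x) - (S t (w - vv) - S t (x - y)) + (S t x - x) - (S t (x - y) - (x - y)) + (y - vv)"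
          by (simp add: algebra_simps)
        have "norm (S t w - S t (w - vv) - vv) \<le> norm (S t w - S t x) + norm (S t (w - vv) - S t (x - y)) + norm (S t x - x) + norm (S t (x - y) - (x - y)) + norm (y - vv)"
          unfolding eq by (rule norm5)
        moreover have "norm (S t (w - vv) - S t (x - y)) \<le> L * q n"
          using order_trans[OF lip3[OF t(1) tt(1) wy3] mult_left_mono[OF qw(4) L(1)]] .
        moreover have "norm (S t w - S t x) \<le> L * q n"
          using order_trans[OF lip1[OF t(1) tt(1) wx] mult_left_mono[OF qw(1) L(1)]] .
        moreover have "norm (S t (x - y) - (x - y)) < e" using tc(2)[of t] t tt by auto
        moreover have "norm (S t x - x) < e" using tb(2)[of t] t tt by auto
        moreover have "norm (y - vv) \<le> q n" using qw(2) by (simp add: norm_minus_commute)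
        ultimately show ?thesis using Kq(1) qK by linarith
      qed
      have hk: "norm ((1/h) *\<^sub>R (S h w - w) - vv) \<le> (2 * e + \<eta> / 4) + (2 * e + \<eta> / 4)"
      proof (rule key[OF C lip1 L(1) _ _ h(1) _ _ B1 B2])
        show "dist x w < r" using qw(1) qr by (simp add: dist_norm norm_minus_commute)
        show "((\<lambda>h. (1/h) *\<^sub>R (S h w - w)) \<longlongrightarrow> vv) (at_right 0)" unfolding w_def vv_def by (rule der)
        show "h \<le> t0" "h \<le> 1" using h tau by auto
      qed
      have eq3: "(1/h) *\<^sub>R (S h x - x) - y = ((1/h) *\<^sub>R (S h w - w) - vv) + (1/h) *\<^sub>R ((S h x - S h w) - (x - w)) + (vv - y)"
        by (simp add: algebra_simps)
      have f1: "norm ((1/h) *\<^sub>R (S h x - x) - y) \<le> norm ((1/h) *\<^sub>R (S h w - w) - vv) + norm ((1/h) *\<^sub>R ((S h x - S h w) - (x - w))) + norm (vv - y)"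
        unfolding eq3 by (rule norm3)
      have f2: "norm ((1/h) *\<^sub>R ((S h x - S h w) - (x - w))) \<le> (1/h) * ((L + 1) * q n)"
      proof -
        have "norm ((S h x - S h w) - (x - w)) \<le> norm (S h x - S h w) + norm (x - w)" by (rule norm_triangle_ineq4)
        moreover have "norm (S h x - S h w) \<le> L * norm (x - w)"
          using lip1[of h x w] h tau wx by auto
        moreover have "norm (x - w) \<le> q n" using qw(1) by (simp add: norm_minus_commute)
        moreover have "L * norm (x - w) \<le> L * q n" using \<open>norm (x - w) \<le> q n\<close> L(1) by (rule mult_left_mono)
        ultimately have "norm ((S h x - S h w) - (x - w)) \<le> L * q n + q n" by linarith
        then have "norm ((S h x - S h w) - (x - w)) \<le> (L + 1) * q n" by (simp add: algebra_simps)
        then show ?thesis using h by (simp add: divide_right_mono)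
      qed
      have f3: "norm (vv - y) \<le> q n" using qw(2) .
      show "norm ((1/h) *\<^sub>R (S h x - x) - y) \<le> 4 * e + \<eta>"
      proof -
        have s1: "norm ((1/h) *\<^sub>R (S h x - x) - y) \<le> (2 * e + \<eta> / 4 + (2 * e + \<eta> / 4)) + 1 / h * ((L + 1) * q n) + q n"
          using f1 f2 f3 hk by linarith
        define Z where "Z = 1 / h * ((L + 1) * q n)"
        define KQ where "KQ = K * q n"
        have "norm ((1/h) *\<^sub>R (S h x - x) - y) \<le> 2 * e + \<eta> / 4 + (2 * e + \<eta> / 4) + Z + q n" "Z + q n \<le> KQ" "KQ < \<eta> / 4"
          using s1 Kq(2) qK unfolding Z_def KQ_def by auto
        then show ?thesis using eta by linarith
      qed
    qed
    show "eventually (\<lambda>h. dist ((1/h) *\<^sub>R (S h x - x)) y < \<epsilon>) (at_right 0)"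
      unfolding eventually_at_right_field
    proof (intro exI[of _ \<tau>] conjI allI impI)
      show "0 < \<tau>" by (rule tau(1))
      fix h :: real assume "0 < h" "h < \<tau>"
      then have "norm ((1/h) *\<^sub>R (S h x - x) - y) \<le> 4 * e" using core by auto
      then show "dist ((1/h) *\<^sub>R (S h x - x)) y < \<epsilon>" using e by (simp add: dist_norm e_def)
    qed
  qed
  have "x \<in> gen_domain S" unfolding gen_domain_def using goal by blast
  moreover have "generator S x = y" unfolding generator_def by (rule tendsto_Lim) (use goal in auto)
  ultimately show ?thesis by blast
qed


end
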